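(* Let $\phi:\mathbb{C}_{+}\to\mathbb{C}_{+}$ be a holomorphic map such that $\phi(\eta)=\eta$ for some $\eta\in\mathbb{C}_{+}$ and such that the composition operator $C_{\phi}f=f\circ\phi$ is bounded on $H^2(\mathbb{C}_{+})$. Then $C_{\phi}$ does not have the positive shadowing property on $H^2(\mathbb{C}_{+})$.
   Context: $\mathbb{C}_{+}=\{w\in\mathbb{C}:\mathrm{Re}(w)>0\}$. $H^2(\mathbb{C}_{+})$ is the Hardy space of holomorphic $f$ on $\mathbb{C}_{+}$ with finite norm $\|f\|_2^2=\sup_{0<x<\infty}\frac{1}{\pi}\int_{-\infty}^{\infty}|f(x+iy)|^2\,dy$. For an operator $T$ on a Banach space $X$ and $\delta>0$, a sequence $(x_n)_{n\in\mathbb{N}}\subset X$ is a $\delta$-pseudotrajectory if $\|Tx_n-x_{n+1}\|\le\delta$ for all $n$. $T$ has the positive shadowing property if for every $\epsilon>0$ there is $\delta>0$ such that for every $\delta$-pseudotrajectory $(x_n)_{n\in\mathbb{N}}$ there exists $x\in X$ with $\|T^nx-x_n\|\le\epsilon$ for all $n\in\mathbb{N}$. *)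

theory Defs
  imports "HOL-Analysis.Analysis"
begin

definition RHP :: "complex set" where
  "RHP = {w. Re w > 0}"

definition H2_sqnorm :: "(complex \<Rightarrow> complex) \<Rightarrow> ennreal" where
  "H2_sqnorm f = (SUP x\<in>{0<..}. (\<integral>\<^sup>+ y. ennreal ((cmod (f (Complex x y)))\<^sup>2) \<partial>lborel))
                  / ennreal pi"

definition H2 :: "(complex \<Rightarrow> complex) set" where
  "H2 = {f. f holomorphic_on RHP \<and> H2_sqnorm f < \<infinity>}"

definition H2_norm :: "(complex \<Rightarrow> complex) \<Rightarrow> real" where
  "H2_norm f = sqrt (enn2real (H2_sqnorm f))"

definition pseudotrajectory :: "'a::minus set \<Rightarrow> ('a \<Rightarrow> real) \<Rightarrow> ('a \<Rightarrow> 'a) \<Rightarrow> real \<Rightarrow> (nat \<Rightarrow> 'a) \<Rightarrow> bool" where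
  "pseudotrajectory X N T \<delta> xs \<longleftrightarrow> (\<forall>n. xs n \<in> X) \<and> (\<forall>n. N (T (xs n) - xs (Suc n)) \<le> \<delta>)"

definition positive_shadowing :: "'a::minus set \<Rightarrow> ('a \<Rightarrow> real) \<Rightarrow> ('a \<Rightarrow> 'a) \<Rightarrow> bool" where
  "positive_shadowing X N T \<longleftrightarrow>
     (\<forall>\<epsilon>>0. \<exists>\<delta>>0. \<forall>xs. pseudotrajectory X N T \<delta> xs \<longrightarrow>
        (\<exists>x\<in>X. \<forall>n. N ((T ^^ n) x - xs n) \<le> \<epsilon>))"

definition bounded_composition_H2 :: "(complex \<Rightarrow> complex) \<Rightarrow> bool" where
  "bounded_composition_H2 \<phi> \<longleftrightarrow> (\<forall>f\<in>H2. f \<circ> \<phi> \<in> H2) \<and>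
     (\<exists>M. \<forall>f\<in>H2. H2_norm (f \<circ> \<phi>) \<le> M * H2_norm f)"

end

theory Submission
  imports Defs "HOL-Complex_Analysis.Complex_Analysis" "HOL-Probability.Sinc_Integral"
begin


lemma H2_sqnorm_fin:
  assumes "f \<in> H2" shows "H2_sqnorm f = ennreal ((H2_norm f)\<^sup>2)"
proof -
  have "H2_sqnorm f < \<infinity>" using assms by (simp add: H2_def)
  then show ?thesis unfolding H2_norm_def
    by (simp add: ennreal_enn2real_if)
qed

lemma line_bound:
  assumes "f \<in> H2" "x > 0"
  shows "(\<integral>\<^sup>+ y. ennreal ((cmod (f (Complex x y)))\<^sup>2) \<partial>lborel) \<le> ennreal (pi * (H2_norm f)\<^sup>2)"
proof -
  let ?S = "SUP x\<in>{0<..}. (\<integral>\<^sup>+ y. ennreal ((cmod (f (Complex x y)))\<^sup>2) \<partial>lborel)"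
  have "(\<integral>\<^sup>+ y. ennreal ((cmod (f (Complex x y)))\<^sup>2) \<partial>lborel) \<le> ?S"
    using assms(2) by (intro SUP_upper) auto
  also have "?S = H2_sqnorm f * ennreal pi"
    unfolding H2_sqnorm_def by (simp add: ennreal_divide_times)
  also have "\<dots> = ennreal (pi * (H2_norm f)\<^sup>2)"
    using H2_sqnorm_fin[OF assms(1)] by (simp add: ennreal_mult'' mult.commute)
  finally show ?thesis .
qed

lemma RHP_open: "open RHP"
  unfolding RHP_def by (simp add: open_halfspace_Re_gt)

lemma H2_cont: "f \<in> H2 \<Longrightarrow> continuous_on RHP f"
  unfolding H2_def by (auto intro: holomorphic_on_imp_continuous_on)

lemma line_cont:
  assumes "f \<in> H2" "x > 0"
  shows "continuous_on UNIV (\<lambda>y. f (Complex x y))"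
proof -
  have "continuous_on UNIV (\<lambda>y. Complex x y)"
    by (simp add: Complex_eq continuous_intros)
  moreover have "(\<lambda>y. Complex x y) ` UNIV \<subseteq> RHP" using assms by (auto simp: RHP_def)
  ultimately show ?thesis by (rule continuous_on_compose2[OF H2_cont[OF assms(1)]])
qed

lemma line_meas:
  assumes "f \<in> H2" "x > 0"
  shows "(\<lambda>y. ennreal ((cmod (f (Complex x y)))\<^sup>2)) \<in> borel_measurable borel"
proof -
  have "continuous_on UNIV (\<lambda>y. (cmod (f (Complex x y)))\<^sup>2)"
    using line_cont[OF assms] by (intro continuous_intros)
  then have "(\<lambda>y. (cmod (f (Complex x y)))\<^sup>2) \<in> borel_measurable borel"
    by (rule borel_measurable_continuous_onI)
  then show ?thesis by measurable
qed

lemma H2_zero: "(\<lambda>_. 0) \<in> H2"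
  unfolding H2_def H2_sqnorm_def by (auto simp: holomorphic_on_const)

lemma sq_tri: "(cmod (a + b))\<^sup>2 \<le> 2 * (cmod a)\<^sup>2 + 2 * (cmod b)\<^sup>2"
proof -
  have "cmod (a + b) \<le> cmod a + cmod b" by (rule norm_triangle_ineq)
  then have "(cmod (a + b))\<^sup>2 \<le> (cmod a + cmod b)\<^sup>2" by (simp add: power_mono)
  also have "\<dots> \<le> 2 * (cmod a)\<^sup>2 + 2 * (cmod b)\<^sup>2"
  proof -
    have "0 \<le> (cmod a - cmod b)\<^sup>2" by simp
    then show ?thesis by (simp add: power2_diff power2_sum)
  qed
  finally show ?thesis .
qed

lemma sq_tri_enn: "ennreal ((cmod (a + b))\<^sup>2) \<le> 2 * ennreal ((cmod a)\<^sup>2) + 2 * ennreal ((cmod b)\<^sup>2)"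
proof -
  have "ennreal ((cmod (a + b))\<^sup>2) \<le> ennreal (2 * (cmod a)\<^sup>2 + 2 * (cmod b)\<^sup>2)"
    by (rule ennreal_leI, rule sq_tri)
  also have "\<dots> = 2 * ennreal ((cmod a)\<^sup>2) + 2 * ennreal ((cmod b)\<^sup>2)"
    by (simp add: ennreal_plus ennreal_mult)
  finally show ?thesis .
qed

lemma H2_add:
  assumes "f \<in> H2" "g \<in> H2"
  shows "(\<lambda>w. f w + g w) \<in> H2"
proof -
  have hol: "(\<lambda>w. f w + g w) holomorphic_on RHP"
    using assms unfolding H2_def by (auto intro: holomorphic_intros)
  define B where "B = 2 * (pi * (H2_norm f)\<^sup>2) + 2 * (pi * (H2_norm g)\<^sup>2)"
  have "(\<integral>\<^sup>+ y. ennreal ((cmod (f (Complex x y) + g (Complex x y)))\<^sup>2) \<partial>lborel) \<le> ennreal B"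
    if x: "x > 0" for x
  proof -
    have "(\<integral>\<^sup>+ y. ennreal ((cmod (f (Complex x y) + g (Complex x y)))\<^sup>2) \<partial>lborel)
        \<le> (\<integral>\<^sup>+ y. (2 * ennreal ((cmod (f (Complex x y)))\<^sup>2) + 2 * ennreal ((cmod (g (Complex x y)))\<^sup>2)) \<partial>lborel)"
      by (intro nn_integral_mono sq_tri_enn)
    also have "\<dots> = 2 * (\<integral>\<^sup>+ y. ennreal ((cmod (f (Complex x y)))\<^sup>2) \<partial>lborel) + 2 * (\<integral>\<^sup>+ y. ennreal ((cmod (g (Complex x y)))\<^sup>2) \<partial>lborel)"
      using line_meas[OF assms(1) x] line_meas[OF assms(2) x]
      by (simp add: nn_integral_add nn_integral_cmult)
    also have "\<dots> \<le> 2 * ennreal (pi * (H2_norm f)\<^sup>2) + 2 * ennreal (pi * (H2_norm g)\<^sup>2)"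
      using line_bound[OF assms(1) x] line_bound[OF assms(2) x]
      by (intro add_mono mult_left_mono) auto
    also have "\<dots> = ennreal B" unfolding B_def
      by (simp add: ennreal_plus ennreal_mult'')
    finally show ?thesis .
  qed
  then have "(SUP x\<in>{0<..}. (\<integral>\<^sup>+ y. ennreal ((cmod (f (Complex x y) + g (Complex x y)))\<^sup>2) \<partial>lborel)) \<le> ennreal B"
    by (intro SUP_least) auto
  then have "H2_sqnorm (\<lambda>w. f w + g w) \<le> ennreal B / ennreal pi"
    unfolding H2_sqnorm_def by (intro divide_right_mono_ennreal) simp
  also have "\<dots> < \<infinity>" using ennreal_divide_eq_top_iff[of "ennreal B" "ennreal pi"] by (simp add: less_top)
  finally show ?thesis using hol unfolding H2_def by simp
qed

lemma H2_scale:
  assumes "f \<in> H2"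
  shows "(\<lambda>w. c * f w) \<in> H2 \<and> H2_norm (\<lambda>w. c * f w) = cmod c * H2_norm f"
proof -
  have hol: "(\<lambda>w. c * f w) holomorphic_on RHP"
    using assms unfolding H2_def by (auto intro: holomorphic_intros)
  have eq: "(\<integral>\<^sup>+ y. ennreal ((cmod (c * f (Complex x y)))\<^sup>2) \<partial>lborel)
      = ennreal ((cmod c)\<^sup>2) * (\<integral>\<^sup>+ y. ennreal ((cmod (f (Complex x y)))\<^sup>2) \<partial>lborel)"
    if x: "x \<in> {0<..}" for x
  proof -
    have "(\<integral>\<^sup>+ y. ennreal ((cmod (c * f (Complex x y)))\<^sup>2) \<partial>lborel)
       = (\<integral>\<^sup>+ y. ennreal ((cmod c)\<^sup>2) * ennreal ((cmod (f (Complex x y)))\<^sup>2) \<partial>lborel)"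
      by (simp add: norm_mult power_mult_distrib ennreal_mult)
    also have "\<dots> = ennreal ((cmod c)\<^sup>2) * (\<integral>\<^sup>+ y. ennreal ((cmod (f (Complex x y)))\<^sup>2) \<partial>lborel)"
      using line_meas[OF assms] x by (simp add: nn_integral_cmult)
    finally show ?thesis .
  qed
  have "H2_sqnorm (\<lambda>w. c * f w) = ennreal ((cmod c)\<^sup>2) * H2_sqnorm f"
    unfolding H2_sqnorm_def
    by (simp add: eq SUP_mult_left_ennreal ennreal_times_divide)
  also have "\<dots> = ennreal ((cmod c)\<^sup>2 * (H2_norm f)\<^sup>2)"
    by (simp add: H2_sqnorm_fin[OF assms] ennreal_mult)
  finally have sq: "H2_sqnorm (\<lambda>w. c * f w) = ennreal ((cmod c)\<^sup>2 * (H2_norm f)\<^sup>2)" .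
  have "(\<lambda>w. c * f w) \<in> H2" using hol sq unfolding H2_def by simp
  moreover have "H2_norm (\<lambda>w. c * f w) = cmod c * H2_norm f"
    unfolding H2_norm_def[of "\<lambda>w. c * f w"] sq
    by (simp add: real_sqrt_mult H2_norm_def)
  ultimately show ?thesis by blast
qed

lemma H2_diff:
  assumes "f \<in> H2" "g \<in> H2" shows "f - g \<in> H2"
proof -
  have "(\<lambda>w. (-1) * g w) \<in> H2" using H2_scale[OF assms(2)] by blast
  from H2_add[OF assms(1) this] have "(\<lambda>w. f w + (-1) * g w) \<in> H2" .
  moreover have "(\<lambda>w. f w + (-1) * g w) = f - g" by (auto simp: fun_eq_iff)
  ultimately show ?thesis by simp
qed

lemma inv_sq_fin: "(\<integral>\<^sup>+ y. ennreal (inverse (1 + y\<^sup>2)) \<partial>lborel) < \<infinity>"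
proof -
  have "integrable lborel (\<lambda>y::real. inverse (1 + y\<^sup>2))"
    using integrable_inverse_1_plus_square by (simp add: set_integrable_def)
  then have "(\<integral>\<^sup>+ y. ennreal (norm (inverse (1 + (y::real)\<^sup>2))) \<partial>lborel) < \<infinity>"
    unfolding integrable_iff_bounded using conjunct2 by simp
  moreover have "\<And>y::real. norm (inverse (1 + y\<^sup>2)) = inverse (1 + y\<^sup>2)"
    by (simp add: add_pos_nonneg)
  ultimately show ?thesis by simp
qed

lemma g0_H2: "(\<lambda>w. 1 / (w + 1)) \<in> H2"
proof -
  have hol: "(\<lambda>w. 1 / (w + 1)) holomorphic_on RHP"
  proof (intro holomorphic_intros)
    fix w assume "w \<in> RHP" then show "w + 1 \<noteq> 0"
      by (auto simp: RHP_def complex_eq_iff)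
  qed
  have pt: "ennreal ((cmod (1 / (Complex x y + 1)))\<^sup>2) \<le> ennreal (inverse (1 + y\<^sup>2))"
    if "x > 0" for x y
  proof (rule ennreal_leI)
    have n: "(cmod (Complex x y + 1))\<^sup>2 = (x + 1)\<^sup>2 + y\<^sup>2"
      by (simp add: cmod_def Complex_eq)
    have "1 \<le> (x + 1)\<^sup>2" using that by (intro one_le_power) simp
    then have "1 + y\<^sup>2 \<le> (x + 1)\<^sup>2 + y\<^sup>2" by simp
    moreover have "0 < 1 + y\<^sup>2" by (simp add: add_pos_nonneg)
    ultimately have "inverse ((x + 1)\<^sup>2 + y\<^sup>2) \<le> inverse (1 + y\<^sup>2)"
      by (rule le_imp_inverse_le)
    then show "(cmod (1 / (Complex x y + 1)))\<^sup>2 \<le> inverse (1 + y\<^sup>2)"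
      using n by (simp add: norm_divide power_one_over inverse_eq_divide)
  qed
  have "(SUP x\<in>{0<..}. (\<integral>\<^sup>+ y. ennreal ((cmod (1 / (Complex x y + 1)))\<^sup>2) \<partial>lborel))
        \<le> (\<integral>\<^sup>+ y. ennreal (inverse (1 + y\<^sup>2)) \<partial>lborel)"
    by (intro SUP_least nn_integral_mono pt) auto
  then have "H2_sqnorm (\<lambda>w. 1 / (w + 1)) \<le> (\<integral>\<^sup>+ y. ennreal (inverse (1 + y\<^sup>2)) \<partial>lborel) / ennreal pi"
    unfolding H2_sqnorm_def by (intro divide_right_mono_ennreal) simp
  also have "\<dots> < \<infinity>"
  proof -
    have "(\<integral>\<^sup>+ y. ennreal (inverse (1 + y\<^sup>2)) \<partial>lborel) \<noteq> \<infinity>"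
      using inv_sq_fin by simp
    then have "(\<integral>\<^sup>+ y. ennreal (inverse (1 + y\<^sup>2)) \<partial>lborel) / ennreal pi \<noteq> \<infinity>"
      by (simp add: ennreal_divide_eq_top_iff)
    then show ?thesis by (simp add: less_top)
  qed
  finally show ?thesis using hol unfolding H2_def by simp
qed



lemma has_contour_integral_linepath_same_Im_iff:
  assumes "Im z = c" "Im z' = c" "Re z = a" "Re z' = b" "a < b"
  shows   "(f has_contour_integral I) (linepath z z') \<longleftrightarrow>
             ((\<lambda>x. f (Complex x c)) has_integral I) {a..b}"
proof -
  have "(f has_contour_integral I) (linepath z z') \<longleftrightarrow>
          ((\<lambda>x. f (linepath z z' x) * (z' - z)) has_integral I) {0..1}"
    by (subst has_contour_integral_linepath) simp_all
  also have "\<dots> \<longleftrightarrow> ((\<lambda>x. f (Complex (a + (b - a) * x) c) * of_real (b - a)) has_integral I) {0..1}"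
  proof -
    have l: "linepath z z' x = Complex (a + (b - a) * x) c" for x
      using assms by (simp add: linepath_def complex_eq_iff algebra_simps)
    have d: "z' - z = of_real (b - a)" using assms by (simp add: complex_eq_iff)
    show ?thesis by (simp only: l d)
  qed
  also have "{0..1} = (\<lambda>x. x / (b - a)) ` {0..b-a}"
    using assms by simp
  also have "((\<lambda>x. f (Complex (a + (b - a) * x) c) * of_real (b - a)) has_integral I) \<dots> \<longleftrightarrow>
             ((\<lambda>x. f (Complex (a + x) c) * of_real (b - a)) has_integral ((b-a) *\<^sub>R I)) {0..b-a}"
    by (subst has_integral_stretch_real_iff) (use assms in simp_all)
  also have "\<dots> \<longleftrightarrow> ((\<lambda>x. of_real (b-a) * (f (Complex x c))) has_integral (b-a) *\<^sub>R I) {a..b}"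
    by (subst has_integral_shift_real_ivl_iff[where c = "-a"])
       (simp_all add: scaleR_conv_of_real mult_ac)
  also have "\<dots> \<longleftrightarrow> ((\<lambda>x. f (Complex x c)) has_integral I) {a..b}"
    by (subst has_integral_mult_right_iff) (use assms in \<open>auto simp: scaleR_conv_of_real\<close>)
  finally show ?thesis .
qed

lemma seg_bound:
  fixes G :: "real \<Rightarrow> complex" and K :: "real \<Rightarrow> real"
  assumes G: "(G has_integral I) {a..b}" and K: "continuous_on {a..b} K"
    and le: "\<And>y. y \<in> {a..b} \<Longrightarrow> cmod (G y) \<le> K y"
  shows "ennreal (cmod I) \<le> (\<integral>\<^sup>+ y. ennreal (indicator {a..b} y * K y) \<partial>lborel)"
proof -
  have Ki: "K integrable_on {a..b}" using K by (rule integrable_continuous_interval)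
  have "cmod I = norm (integral {a..b} G)" using G by (simp add: integral_unique)
  also have "\<dots> \<le> integral {a..b} K"
    using G Ki le by (intro integral_norm_bound_integral) auto
  finally have 1: "cmod I \<le> integral {a..b} K" .
  have nn: "\<And>y. y \<in> {a..b} \<Longrightarrow> 0 \<le> K y" using le by (meson norm_ge_zero order_trans)
  have "(\<integral>\<^sup>+ y. ennreal (indicator {a..b} y * K y) \<partial>lborel) = ennreal (integral {a..b} K)"
    using nn_integral_has_integral_lebesgue[where f=K and \<Omega>="{a..b}", OF nn integrable_integral[OF Ki]]
    by simp
  with 1 show ?thesis by (simp add: ennreal_leI)
qed


lemma hor_cont:
  assumes "f \<in> H2" "0 < a"
  shows "continuous_on {a..b} (\<lambda>x. (cmod (f (Complex x c)))\<^sup>2)"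
proof -
  have "continuous_on {a..b} (\<lambda>x. Complex x c)"
    by (simp add: Complex_eq continuous_intros)
  moreover have "(\<lambda>x. Complex x c) ` {a..b} \<subseteq> RHP" using assms by (auto simp: RHP_def)
  ultimately have "continuous_on {a..b} (\<lambda>x. f (Complex x c))"
    by (rule continuous_on_compose2[OF H2_cont[OF assms(1)]])
  then show ?thesis by (intro continuous_intros)
qed

lemma ver_cont:
  assumes "f \<in> H2" "0 < x"
  shows "continuous_on S (\<lambda>y. (cmod (f (Complex x y)))\<^sup>2)"
proof -
  have "continuous_on UNIV (\<lambda>y. (cmod (f (Complex x y)))\<^sup>2)"
    using line_cont[OF assms] by (intro continuous_intros)
  then show ?thesis by (rule continuous_on_subset) simp
qed

lemma pt_bound:
  assumes "0 < h" "h \<le> cmod (w - \<eta>)"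
  shows "cmod (complex_of_real h * ((f w)\<^sup>2 / (w - \<eta>))) \<le> (cmod (f w))\<^sup>2"
proof -
  have pos: "0 < cmod (w - \<eta>)" using assms by linarith
  have "cmod (complex_of_real h * ((f w)\<^sup>2 / (w - \<eta>))) = h * (cmod (f w))\<^sup>2 / cmod (w - \<eta>)"
    using assms by (simp add: norm_mult norm_divide norm_power)
  also have "\<dots> \<le> cmod (w - \<eta>) * (cmod (f w))\<^sup>2 / cmod (w - \<eta>)"
    using assms pos by (intro divide_right_mono mult_right_mono) auto
  also have "\<dots> = (cmod (f w))\<^sup>2" using pos by simp
  finally show ?thesis .
qed

lemma rect_bound:
  assumes f: "f \<in> H2" and pq: "p = Re \<eta>" "q = Im \<eta>"
    and h: "0 < h" "h < p" and u: "h \<le> u"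
  shows "ennreal (2 * pi * h * (cmod (f \<eta>))\<^sup>2) \<le>
      (\<integral>\<^sup>+ x. ennreal (indicator {p-h..p+h} x * (cmod (f (Complex x (q-u))))\<^sup>2) \<partial>lborel)
    + (\<integral>\<^sup>+ x. ennreal (indicator {p-h..p+h} x * (cmod (f (Complex x (q+u))))\<^sup>2) \<partial>lborel)
    + (\<integral>\<^sup>+ y. ennreal (indicator {q-u..q+u} y * (cmod (f (Complex (p+h) y)))\<^sup>2) \<partial>lborel)
    + (\<integral>\<^sup>+ y. ennreal (indicator {q-u..q+u} y * (cmod (f (Complex (p-h) y)))\<^sup>2) \<partial>lborel)"
    (is "_ \<le> ?R")
proof -
  define F where "F = (\<lambda>w. (f w)\<^sup>2 / (w - \<eta>))"
  define a1 where "a1 = Complex (p-h) (q-u)"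
  define a2 where "a2 = Complex (p+h) (q-u)"
  define a3 where "a3 = Complex (p+h) (q+u)"
  define a4 where "a4 = Complex (p-h) (q+u)"
  have ph: "0 < p - h" using h by simp
  have qu: "q - u < q + u" using h u by simp
  have \<eta>: "\<eta> = Complex p q" using pq by (simp add: complex_eq_iff)
  have RHP_iff: "w \<in> RHP \<longleftrightarrow> 0 < Re w" for w by (simp add: RHP_def)
  have contF: "continuous_on (RHP - {\<eta>}) F"
    unfolding F_def using H2_cont[OF f]
    by (intro continuous_intros) (auto elim: continuous_on_subset)
  have seg12: "closed_segment a1 a2 \<subseteq> RHP - {\<eta>}"
    using ph qu h by (auto simp: closed_segment_same_Im a1_def a2_def closed_segment_eq_real_ivl RHP_iff \<eta>)
  have seg23: "closed_segment a2 a3 \<subseteq> RHP - {\<eta>}"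
    using ph qu h by (auto simp: closed_segment_same_Re a2_def a3_def closed_segment_eq_real_ivl RHP_iff \<eta>)
  have seg34: "closed_segment a3 a4 \<subseteq> RHP - {\<eta>}"
    using ph qu h by (auto simp: closed_segment_same_Im a3_def a4_def closed_segment_eq_real_ivl RHP_iff \<eta>)
  have seg41: "closed_segment a4 a1 \<subseteq> RHP - {\<eta>}"
    using ph qu h by (auto simp: closed_segment_same_Re a4_def a1_def closed_segment_eq_real_ivl RHP_iff \<eta>)
  define I1 where "I1 = contour_integral (linepath a1 a2) F"
  define I2 where "I2 = contour_integral (linepath a2 a3) F"
  define I3 where "I3 = contour_integral (linepath a3 a4) F"
  define I4 where "I4 = contour_integral (linepath a4 a1) F"
  have H1: "(F has_contour_integral I1) (linepath a1 a2)" unfolding I1_def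
    by (intro has_contour_integral_integral contour_integrable_continuous_linepath
        continuous_on_subset[OF contF seg12])
  have H2': "(F has_contour_integral I2) (linepath a2 a3)" unfolding I2_def
    by (intro has_contour_integral_integral contour_integrable_continuous_linepath
        continuous_on_subset[OF contF seg23])
  have H3: "(F has_contour_integral I3) (linepath a3 a4)" unfolding I3_def
    by (intro has_contour_integral_integral contour_integrable_continuous_linepath
        continuous_on_subset[OF contF seg34])
  have H4: "(F has_contour_integral I4) (linepath a4 a1)" unfolding I4_def
    by (intro has_contour_integral_integral contour_integrable_continuous_linepath
        continuous_on_subset[OF contF seg41])
  have rp: "rectpath a1 a3 = linepath a1 a2 +++ linepath a2 a3 +++ linepath a3 a4 +++ linepath a4 a1"
    by (simp add: rectpath_def Let_def a1_def a2_def a3_def a4_def)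
  have Hall: "(F has_contour_integral (I1 + (I2 + (I3 + I4)))) (rectpath a1 a3)"
    unfolding rp
    by (intro has_contour_integral_join H1 H2' H3 H4 valid_path_join) auto
  have pim: "path_image (rectpath a1 a3) \<subseteq> RHP - {\<eta>}"
    unfolding rp using seg12 seg23 seg34 seg41
    by (simp add: path_image_join)
  have hol2: "(\<lambda>w. (f w)\<^sup>2) holomorphic_on RHP"
    using f unfolding H2_def by (auto intro: holomorphic_intros)
  have intRHP: "interior RHP = RHP" using RHP_open by (rule interior_open)
  have cvx: "convex RHP" unfolding RHP_def using convex_halfspace_Re_gt[of 0] by simp
  have inbox: "\<eta> \<in> box a1 a3"
    using h u by (auto simp: in_box_complex_iff a1_def a3_def pq)
  have C: "(F has_contour_integral (2 * pi * \<i> * winding_number (rectpath a1 a3) \<eta> * (f \<eta>)\<^sup>2)) (rectpath a1 a3)"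
    unfolding F_def
    by (rule Cauchy_integral_formula_convex_simple[OF cvx hol2])
       (use intRHP pq h pim in \<open>auto simp: RHP_def\<close>)
  have eq: "2 * pi * \<i> * (f \<eta>)\<^sup>2 = I1 + (I2 + (I3 + I4))"
    using has_contour_integral_unique[OF C Hall] winding_number_rectpath[OF inbox] by simp
  have "2 * pi * h * (cmod (f \<eta>))\<^sup>2 = h * cmod (2 * pi * \<i> * (f \<eta>)\<^sup>2)"
    by (simp add: norm_mult norm_power)
  also have "\<dots> \<le> h * cmod I1 + h * cmod I2 + h * cmod I3 + h * cmod I4"
  proof -
    have "cmod (I1 + (I2 + (I3 + I4))) \<le> cmod I1 + cmod I2 + cmod I3 + cmod I4"
      by (smt (verit) norm_triangle_ineq)
    then show ?thesis unfolding eq using h by (simp add: distrib_left[symmetric] mult_left_mono)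
  qed
  finally have main: "2 * pi * h * (cmod (f \<eta>))\<^sup>2 \<le> h * cmod I1 + h * cmod I2 + h * cmod I3 + h * cmod I4" .
  have ReIm: "Re (Complex x y - \<eta>) = x - p" "Im (Complex x y - \<eta>) = y - q" for x y
    using pq by simp_all
  have dIm: "h \<le> cmod (Complex x (q + t) - \<eta>)" if "h \<le> \<bar>t\<bar>" for x t
    using abs_Im_le_cmod[of "Complex x (q + t) - \<eta>"] that ReIm by simp
  have dRe: "h \<le> cmod (Complex (p + t) y - \<eta>)" if "h \<le> \<bar>t\<bar>" for y t
    using abs_Re_le_cmod[of "Complex (p + t) y - \<eta>"] that ReIm by simp
  have "((\<lambda>x. F (Complex x (q-u))) has_integral I1) {p-h..p+h}"
    using H1 has_contour_integral_linepath_same_Im_iff[of a1 "q-u" a2 "p-h" "p+h" F I1] h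
    by (simp add: a1_def a2_def)
  then have "((\<lambda>x. complex_of_real h * F (Complex x (q-u))) has_integral (complex_of_real h * I1)) {p-h..p+h}"
    by (rule has_integral_mult_right)
  then have B1: "ennreal (cmod (complex_of_real h * I1)) \<le>
      (\<integral>\<^sup>+ x. ennreal (indicator {p-h..p+h} x * (cmod (f (Complex x (q-u))))\<^sup>2) \<partial>lborel)"
  proof (rule seg_bound[OF _ hor_cont[OF f ph]])
    fix x assume "x \<in> {p-h..p+h}"
    have "h \<le> cmod (Complex x (q + (-u)) - \<eta>)" by (rule dIm) (use u h in simp)
    then show "cmod (complex_of_real h * F (Complex x (q - u))) \<le> (cmod (f (Complex x (q - u))))\<^sup>2"
      unfolding F_def using pt_bound[OF h(1)] by simp
  qed
  have "((\<lambda>x. F (Complex x (q+u))) has_integral (-I3)) {p-h..p+h}"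
    using has_contour_integral_reverse_linepath[OF H3]
      has_contour_integral_linepath_same_Im_iff[of a4 "q+u" a3 "p-h" "p+h" F "-I3"] h
    by (simp add: a3_def a4_def)
  then have "((\<lambda>x. complex_of_real h * F (Complex x (q+u))) has_integral (complex_of_real h * (-I3))) {p-h..p+h}"
    by (rule has_integral_mult_right)
  then have B3: "ennreal (cmod (complex_of_real h * (-I3))) \<le>
      (\<integral>\<^sup>+ x. ennreal (indicator {p-h..p+h} x * (cmod (f (Complex x (q+u))))\<^sup>2) \<partial>lborel)"
  proof (rule seg_bound[OF _ hor_cont[OF f ph]])
    fix x assume "x \<in> {p-h..p+h}"
    have "h \<le> cmod (Complex x (q + u) - \<eta>)" by (rule dIm) (use u h in simp)
    then show "cmod (complex_of_real h * F (Complex x (q + u))) \<le> (cmod (f (Complex x (q + u))))\<^sup>2"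
      unfolding F_def using pt_bound[OF h(1)] by simp
  qed
  have "((\<lambda>y. F (Complex (p+h) y)) has_integral (-\<i> * I2)) {q-u..q+u}"
    using H2' has_contour_integral_linepath_same_Re_iff[of a2 "p+h" a3 "q-u" "q+u" F I2] qu
    by (simp add: a2_def a3_def)
  then have "((\<lambda>y. complex_of_real h * F (Complex (p+h) y)) has_integral (complex_of_real h * (-\<i> * I2))) {q-u..q+u}"
    by (rule has_integral_mult_right)
  then have B2: "ennreal (cmod (complex_of_real h * (-\<i> * I2))) \<le>
      (\<integral>\<^sup>+ y. ennreal (indicator {q-u..q+u} y * (cmod (f (Complex (p+h) y)))\<^sup>2) \<partial>lborel)"
  proof (rule seg_bound[OF _ ver_cont[OF f]])
    show "0 < p + h" using h by simp
    fix y assume "y \<in> {q-u..q+u}"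
    have "h \<le> cmod (Complex (p + h) y - \<eta>)" by (rule dRe) (use h in simp)
    then show "cmod (complex_of_real h * F (Complex (p + h) y)) \<le> (cmod (f (Complex (p + h) y)))\<^sup>2"
      unfolding F_def using pt_bound[OF h(1)] by simp
  qed
  have "((\<lambda>y. F (Complex (p-h) y)) has_integral (-\<i> * (-I4))) {q-u..q+u}"
    using has_contour_integral_reverse_linepath[OF H4]
      has_contour_integral_linepath_same_Re_iff[of a1 "p-h" a4 "q-u" "q+u" F "-I4"] qu
    by (simp add: a1_def a4_def)
  then have "((\<lambda>y. complex_of_real h * F (Complex (p-h) y)) has_integral (complex_of_real h * (-\<i> * (-I4)))) {q-u..q+u}"
    by (rule has_integral_mult_right)
  then have B4: "ennreal (cmod (complex_of_real h * (-\<i> * (-I4)))) \<le>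
      (\<integral>\<^sup>+ y. ennreal (indicator {q-u..q+u} y * (cmod (f (Complex (p-h) y)))\<^sup>2) \<partial>lborel)"
  proof (rule seg_bound[OF _ ver_cont[OF f ph]])
    fix y assume "y \<in> {q-u..q+u}"
    have "h \<le> cmod (Complex (p + (-h)) y - \<eta>)" by (rule dRe) (use h in simp)
    then show "cmod (complex_of_real h * F (Complex (p - h) y)) \<le> (cmod (f (Complex (p - h) y)))\<^sup>2"
      unfolding F_def using pt_bound[OF h(1)] by simp
  qed
  have e1: "h * cmod I1 = cmod (complex_of_real h * I1)" using h by (simp add: norm_mult)
  have e2: "h * cmod I2 = cmod (complex_of_real h * (-\<i> * I2))" using h by (simp add: norm_mult)
  have e3: "h * cmod I3 = cmod (complex_of_real h * (-I3))" using h by (simp add: norm_mult)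
  have e4: "h * cmod I4 = cmod (complex_of_real h * (-\<i> * (-I4)))" using h by (simp add: norm_mult)
  have "ennreal (2 * pi * h * (cmod (f \<eta>))\<^sup>2) \<le> ennreal (h * cmod I1 + h * cmod I3 + h * cmod I2 + h * cmod I4)"
    by (rule ennreal_leI) (use main in linarith)
  also have "\<dots> = ennreal (h * cmod I1) + ennreal (h * cmod I3) + ennreal (h * cmod I2) + ennreal (h * cmod I4)"
    using h by (simp add: ennreal_plus)
  also have "\<dots> \<le> ?R"
    unfolding e1 e2 e3 e4 by (intro add_mono B1 B2 B3 B4)
  finally show ?thesis .
qed


lemma hor_meas:
  assumes "f \<in> H2" "0 < a"
  shows "(\<lambda>x. ennreal (indicator {a..b} x * (cmod (f (Complex x c)))\<^sup>2)) \<in> borel_measurable borel"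
proof -
  have "(\<lambda>x. indicator {a..b} x *\<^sub>R (cmod (f (Complex x c)))\<^sup>2) \<in> borel_measurable borel"
    by (rule borel_measurable_continuous_on_indicator[OF _ hor_cont[OF assms]]) simp
  then show ?thesis by simp
qed

lemma avg_exists:
  assumes f: "f \<in> H2" and h: "0 < h" "h < p"
  shows "\<exists>u\<in>{h..2*h}.
      (\<integral>\<^sup>+ x. ennreal (indicator {p-h..p+h} x * (cmod (f (Complex x (q-u))))\<^sup>2) \<partial>lborel)
    + (\<integral>\<^sup>+ x. ennreal (indicator {p-h..p+h} x * (cmod (f (Complex x (q+u))))\<^sup>2) \<partial>lborel)
    \<le> ennreal (4 * pi * (H2_norm f)\<^sup>2 + 1)"
proof (rule ccontr)
  define S where "S = (H2_norm f)\<^sup>2"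
  have S0: "0 \<le> S" unfolding S_def by simp
  define J where "J = {p-h..p+h}"
  define U where "U = {h..2*h}"
  have ph: "0 < p - h" using h by simp
  have xJ: "0 < x" if "x \<in> J" for x using that ph unfolding J_def by auto
  define g where "g z = (cmod (f (Complex (fst z) (q - snd z))))\<^sup>2 + (cmod (f (Complex (fst z) (q + snd z))))\<^sup>2"
    for z :: "real \<times> real"
  define \<Phi> where "\<Phi> x u = ennreal (indicator (J \<times> U) (x, u) * g (x, u))" for x u :: real
  assume "\<not> ?thesis"
  then have big: "ennreal (4 * pi * S + 1) <
      (\<integral>\<^sup>+ x. ennreal (indicator J x * (cmod (f (Complex x (q-u))))\<^sup>2) \<partial>lborel)
    + (\<integral>\<^sup>+ x. ennreal (indicator J x * (cmod (f (Complex x (q+u))))\<^sup>2) \<partial>lborel)"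
    if "u \<in> U" for u
    using that unfolding S_def J_def U_def by (auto simp: not_le)
  have contg: "continuous_on (J \<times> U) g"
  proof -
    have c1: "continuous_on (J \<times> U) (\<lambda>z. Complex (fst z) (q + s * snd z))" for s
      by (simp add: Complex_eq continuous_intros)
    have s1: "(\<lambda>z. Complex (fst z) (q + s * snd z)) ` (J \<times> U) \<subseteq> RHP" for s
      using xJ by (auto simp: RHP_def)
    have "continuous_on (J \<times> U) (\<lambda>z. f (Complex (fst z) (q + s * snd z)))" for s
      by (rule continuous_on_compose2[OF H2_cont[OF f] c1 s1])
    from this[of "-1"] this[of 1] show ?thesis unfolding g_def
      by (intro continuous_intros) simp_all
  qed
  have closedJU: "closed (J \<times> U)" unfolding J_def U_def by (intro closed_Times) simp_all
  have "(\<lambda>z. indicator (J \<times> U) z *\<^sub>R g z) \<in> borel_measurable borel"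
    by (rule borel_measurable_continuous_on_indicator[OF _ contg]) (use closedJU in simp)
  then have "(\<lambda>z. ennreal (indicator (J \<times> U) z * g z)) \<in> borel_measurable borel" by simp
  moreover have "case_prod \<Phi> = (\<lambda>z. ennreal (indicator (J \<times> U) z * g z))"
    by (auto simp: \<Phi>_def fun_eq_iff)
  ultimately have measPhi: "case_prod \<Phi> \<in> borel_measurable (lborel \<Otimes>\<^sub>M lborel)"
    by (simp add: lborel_prod)
  have Fub: "(\<integral>\<^sup>+ u. (\<integral>\<^sup>+ x. \<Phi> x u \<partial>lborel) \<partial>lborel) = (\<integral>\<^sup>+ x. (\<integral>\<^sup>+ u. \<Phi> x u \<partial>lborel) \<partial>lborel)"
    by (rule lborel_pair.Fubini'[OF measPhi])
  have inner_up: "(\<integral>\<^sup>+ u. \<Phi> x u \<partial>lborel) \<le> ennreal (2 * pi * S) * indicator J x" for x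
  proof (cases "x \<in> J")
    case False
    then show ?thesis by (simp add: \<Phi>_def)
  next
    case True
    have x0: "0 < x" using xJ[OF True] .
    have m1: "(\<lambda>u. ennreal ((cmod (f (Complex x (q - u))))\<^sup>2)) \<in> borel_measurable borel"
      by (rule measurable_compose[OF _ line_meas[OF f x0]]) simp
    have m2: "(\<lambda>u. ennreal ((cmod (f (Complex x (q + u))))\<^sup>2)) \<in> borel_measurable borel"
      by (rule measurable_compose[OF _ line_meas[OF f x0]]) simp
    have "(\<integral>\<^sup>+ u. \<Phi> x u \<partial>lborel) \<le>
        (\<integral>\<^sup>+ u. ennreal ((cmod (f (Complex x (q - u))))\<^sup>2) + ennreal ((cmod (f (Complex x (q + u))))\<^sup>2) \<partial>lborel)"
    proof (rule nn_integral_mono)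
      fix u
      have "indicator (J \<times> U) (x, u) * g (x, u) \<le> g (x, u)"
        unfolding g_def by (simp add: indicator_def)
      then show "\<Phi> x u \<le> ennreal ((cmod (f (Complex x (q - u))))\<^sup>2) + ennreal ((cmod (f (Complex x (q + u))))\<^sup>2)"
        unfolding \<Phi>_def by (simp add: g_def ennreal_plus[symmetric] ennreal_leI del: ennreal_plus)
    qed
    also have "\<dots> = (\<integral>\<^sup>+ u. ennreal ((cmod (f (Complex x (q - u))))\<^sup>2) \<partial>lborel)
        + (\<integral>\<^sup>+ u. ennreal ((cmod (f (Complex x (q + u))))\<^sup>2) \<partial>lborel)"
      by (rule nn_integral_add) (use m1 m2 in simp_all)
    also have "(\<integral>\<^sup>+ u. ennreal ((cmod (f (Complex x (q - u))))\<^sup>2) \<partial>lborel)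
        = (\<integral>\<^sup>+ y. ennreal ((cmod (f (Complex x y)))\<^sup>2) \<partial>lborel)"
      using nn_integral_real_affine[OF line_meas[OF f x0], of "-1" q] by simp
    also have "(\<integral>\<^sup>+ u. ennreal ((cmod (f (Complex x (q + u))))\<^sup>2) \<partial>lborel)
        = (\<integral>\<^sup>+ y. ennreal ((cmod (f (Complex x y)))\<^sup>2) \<partial>lborel)"
      using nn_integral_real_affine[OF line_meas[OF f x0], of 1 q] by simp
    also have "(\<integral>\<^sup>+ y. ennreal ((cmod (f (Complex x y)))\<^sup>2) \<partial>lborel) + (\<integral>\<^sup>+ y. ennreal ((cmod (f (Complex x y)))\<^sup>2) \<partial>lborel)
        \<le> ennreal (pi * S) + ennreal (pi * S)"
      using line_bound[OF f x0] unfolding S_def by (intro add_mono) auto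
    also have "\<dots> = ennreal (2 * pi * S) * indicator J x"
      using True S0 by (simp add: ennreal_plus[symmetric] del: ennreal_plus)
    finally show ?thesis .
  qed
  have "(\<integral>\<^sup>+ x. (\<integral>\<^sup>+ u. \<Phi> x u \<partial>lborel) \<partial>lborel) \<le> (\<integral>\<^sup>+ x. ennreal (2 * pi * S) * indicator J x \<partial>lborel)"
    by (intro nn_integral_mono inner_up)
  also have "\<dots> = ennreal (2 * pi * S) * ennreal (2 * h)"
    using h unfolding J_def by (simp add: nn_integral_cmult_indicator)
  also have "\<dots> = ennreal (2 * pi * S * (2 * h))"
    by (rule ennreal_mult[symmetric]) (use S0 h in auto)
  finally have up: "(\<integral>\<^sup>+ x. (\<integral>\<^sup>+ u. \<Phi> x u \<partial>lborel) \<partial>lborel) \<le> ennreal (2 * pi * S * (2 * h))" .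
  have inner_low: "ennreal (4 * pi * S + 1) * indicator U u \<le> (\<integral>\<^sup>+ x. \<Phi> x u \<partial>lborel)" for u
  proof (cases "u \<in> U")
    case False
    then show ?thesis by simp
  next
    case True
    have J0: "0 < p - h" by (rule ph)
    have "(\<integral>\<^sup>+ x. \<Phi> x u \<partial>lborel) =
        (\<integral>\<^sup>+ x. ennreal (indicator J x * (cmod (f (Complex x (q-u))))\<^sup>2)
              + ennreal (indicator J x * (cmod (f (Complex x (q+u))))\<^sup>2) \<partial>lborel)"
      using True by (intro nn_integral_cong) (simp add: \<Phi>_def g_def indicator_def ennreal_plus[symmetric] del: ennreal_plus)
    also have "\<dots> = (\<integral>\<^sup>+ x. ennreal (indicator J x * (cmod (f (Complex x (q-u))))\<^sup>2) \<partial>lborel)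
              + (\<integral>\<^sup>+ x. ennreal (indicator J x * (cmod (f (Complex x (q+u))))\<^sup>2) \<partial>lborel)"
      unfolding J_def by (rule nn_integral_add) (use hor_meas[OF f J0] in simp_all)
    finally show ?thesis using big[OF True] True by simp
  qed
  have "ennreal (4 * pi * S + 1) * ennreal h = (\<integral>\<^sup>+ u. ennreal (4 * pi * S + 1) * indicator U u \<partial>lborel)"
    using h unfolding U_def by (simp add: nn_integral_cmult_indicator)
  also have "\<dots> \<le> (\<integral>\<^sup>+ u. (\<integral>\<^sup>+ x. \<Phi> x u \<partial>lborel) \<partial>lborel)"
    by (intro nn_integral_mono inner_low)
  finally have low: "ennreal ((4 * pi * S + 1) * h) \<le> (\<integral>\<^sup>+ u. (\<integral>\<^sup>+ x. \<Phi> x u \<partial>lborel) \<partial>lborel)"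
    using S0 h by (simp add: ennreal_mult)
  from low up Fub have "ennreal ((4 * pi * S + 1) * h) \<le> ennreal (2 * pi * S * (2 * h))" by simp
  then have "(4 * pi * S + 1) * h \<le> 2 * pi * S * (2 * h)"
    using S0 h by (subst (asm) ennreal_le_iff) auto
  then show False using h by (simp add: algebra_simps)
qed


lemma eval_bound:
  assumes f: "f \<in> H2" and \<eta>: "0 < Re \<eta>"
  shows "2 * pi * (Re \<eta> / 4) * (cmod (f \<eta>))\<^sup>2 \<le> 6 * pi * (H2_norm f)\<^sup>2 + 1"
proof -
  define p where "p = Re \<eta>"
  define q where "q = Im \<eta>"
  define h where "h = p / 4"
  define S where "S = (H2_norm f)\<^sup>2"
  have S0: "0 \<le> S" unfolding S_def by simp
  have h0: "0 < h" "h < p" using \<eta> unfolding h_def p_def by simp_all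
  obtain u where u: "u \<in> {h..2*h}" and PQ:
     "(\<integral>\<^sup>+ x. ennreal (indicator {p-h..p+h} x * (cmod (f (Complex x (q-u))))\<^sup>2) \<partial>lborel)
    + (\<integral>\<^sup>+ x. ennreal (indicator {p-h..p+h} x * (cmod (f (Complex x (q+u))))\<^sup>2) \<partial>lborel)
    \<le> ennreal (4 * pi * S + 1)"
    using avg_exists[OF f h0, of q] unfolding S_def by blast
  have V: "(\<integral>\<^sup>+ y. ennreal (indicator {q-u..q+u} y * (cmod (f (Complex x y)))\<^sup>2) \<partial>lborel) \<le> ennreal (pi * S)"
    if "0 < x" for x
  proof -
    have "(\<integral>\<^sup>+ y. ennreal (indicator {q-u..q+u} y * (cmod (f (Complex x y)))\<^sup>2) \<partial>lborel)
        \<le> (\<integral>\<^sup>+ y. ennreal ((cmod (f (Complex x y)))\<^sup>2) \<partial>lborel)"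
      by (intro nn_integral_mono ennreal_leI) (simp add: indicator_def)
    also have "\<dots> \<le> ennreal (pi * S)" using line_bound[OF f that] unfolding S_def .
    finally show ?thesis .
  qed
  have R: "ennreal (2 * pi * h * (cmod (f \<eta>))\<^sup>2) \<le>
      (\<integral>\<^sup>+ x. ennreal (indicator {p-h..p+h} x * (cmod (f (Complex x (q-u))))\<^sup>2) \<partial>lborel)
    + (\<integral>\<^sup>+ x. ennreal (indicator {p-h..p+h} x * (cmod (f (Complex x (q+u))))\<^sup>2) \<partial>lborel)
    + (\<integral>\<^sup>+ y. ennreal (indicator {q-u..q+u} y * (cmod (f (Complex (p+h) y)))\<^sup>2) \<partial>lborel)
    + (\<integral>\<^sup>+ y. ennreal (indicator {q-u..q+u} y * (cmod (f (Complex (p-h) y)))\<^sup>2) \<partial>lborel)"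
    by (rule rect_bound[OF f p_def q_def h0]) (use u in simp)
  also have "\<dots> \<le> ennreal (4 * pi * S + 1) + ennreal (pi * S) + ennreal (pi * S)"
    by (intro add_mono PQ V) (use h0 in simp_all)
  also have "\<dots> = ennreal (6 * pi * S + 1)"
    using S0 by (simp add: ennreal_plus[symmetric] del: ennreal_plus)
  finally have "2 * pi * h * (cmod (f \<eta>))\<^sup>2 \<le> 6 * pi * S + 1"
    using S0 by (subst (asm) ennreal_le_iff) auto
  then show ?thesis unfolding h_def p_def S_def .
qed


theorem proposition4p1:
  fixes \<phi> :: "complex \<Rightarrow> complex" and \<eta> :: complex
  assumes "\<phi> holomorphic_on RHP"
    and "\<phi> ` RHP \<subseteq> RHP"
    and "\<eta> \<in> RHP" and "\<phi> \<eta> = \<eta>"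
    and "bounded_composition_H2 \<phi>"
  shows "\<not> positive_shadowing H2 H2_norm (\<lambda>f. f \<circ> \<phi>)"
proof
  define T where "T = (\<lambda>f::complex \<Rightarrow> complex. f \<circ> \<phi>)"
  assume "positive_shadowing H2 H2_norm (\<lambda>f. f \<circ> \<phi>)"
  then obtain \<delta> where \<delta>: "\<delta> > 0" and sh: "\<And>xs. pseudotrajectory H2 H2_norm T \<delta> xs \<Longrightarrow>
      (\<exists>x\<in>H2. \<forall>n. H2_norm ((T ^^ n) x - xs n) \<le> 1)"
    unfolding positive_shadowing_def T_def by (meson zero_less_one)
  have TH2: "T g \<in> H2" if "g \<in> H2" for g
    using assms(5) that unfolding bounded_composition_H2_def T_def by blast
  have \<eta>0: "0 < Re \<eta>" using assms(3) by (simp add: RHP_def)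
  define g0 where "g0 = (\<lambda>w::complex. 1 / (w + 1))"
  have g0: "g0 \<in> H2" unfolding g0_def by (rule g0_H2)
  define N0 where "N0 = H2_norm g0"
  have N0: "0 \<le> N0" unfolding N0_def H2_norm_def by simp
  define c where "c = \<delta> / (N0 + 1)"
  have c0: "0 < c" unfolding c_def using \<delta> N0 by simp
  define v where "v = (\<lambda>w. complex_of_real c * g0 w)"
  have v: "v \<in> H2" "H2_norm v = c * N0"
    using H2_scale[OF g0, of "complex_of_real c"] c0 unfolding v_def N0_def by auto
  have vnorm: "H2_norm v \<le> \<delta>"
  proof -
    have "c * N0 \<le> c * (N0 + 1)" using c0 by simp
    also have "\<dots> = \<delta>" unfolding c_def using N0 by simp
    finally show ?thesis using v by simp
  qed
  have v\<eta>: "v \<eta> \<noteq> 0"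
  proof -
    have "\<eta> + 1 \<noteq> 0" using \<eta>0 by (auto simp: complex_eq_iff)
    then show ?thesis unfolding v_def g0_def using c0 by simp
  qed
  define xs where "xs = rec_nat (\<lambda>_. 0) (\<lambda>n y. (\<lambda>w. T y w + v w))"
  have xs0: "xs 0 = (\<lambda>_. 0)" and xsS: "xs (Suc n) = (\<lambda>w. T (xs n) w + v w)" for n
    unfolding xs_def by simp_all
  have xsH2: "xs n \<in> H2" for n
  proof (induction n)
    case 0 then show ?case using H2_zero by (simp add: xs0)
  next
    case (Suc n) then show ?case unfolding xsS by (intro H2_add TH2 v)
  qed
  have xs\<eta>: "xs n \<eta> = of_nat n * v \<eta>" for n
  proof (induction n)
    case 0 then show ?case by (simp add: xs0)
  next
    case (Suc n) then show ?case
      unfolding xsS by (simp add: T_def assms(4) algebra_simps)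
  qed
  have pt: "pseudotrajectory H2 H2_norm T \<delta> xs"
    unfolding pseudotrajectory_def
  proof (intro conjI allI)
    fix n
    show "xs n \<in> H2" by (rule xsH2)
    have "T (xs n) - xs (Suc n) = (\<lambda>w. (-1) * v w)"
      unfolding xsS by (auto simp: fun_eq_iff)
    then have "H2_norm (T (xs n) - xs (Suc n)) = H2_norm v"
      using H2_scale[OF v(1), of "-1"] by simp
    then show "H2_norm (T (xs n) - xs (Suc n)) \<le> \<delta>" using vnorm by simp
  qed
  obtain x where x: "x \<in> H2" and close: "\<And>n. H2_norm ((T ^^ n) x - xs n) \<le> 1"
    using sh[OF pt] by blast
  have TnH2: "(T ^^ n) x \<in> H2" for n
    by (induction n) (simp_all add: x TH2)
  have Tn\<eta>: "(T ^^ n) x \<eta> = x \<eta>" for n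
    by (induction n) (simp_all add: T_def assms(4))
  define B where "B = (6 * pi + 1) / (2 * pi * (Re \<eta> / 4))"
  have Bd: "(cmod (x \<eta> - of_nat n * v \<eta>))\<^sup>2 \<le> B" for n
  proof -
    have D: "(T ^^ n) x - xs n \<in> H2" by (rule H2_diff[OF TnH2 xsH2])
    have n1: "(H2_norm ((T ^^ n) x - xs n))\<^sup>2 \<le> 1"
    proof -
      have "0 \<le> H2_norm ((T ^^ n) x - xs n)" by (simp add: H2_norm_def)
      then show ?thesis using close[of n] by (simp add: power_le_one)
    qed
    have "2 * pi * (Re \<eta> / 4) * (cmod (((T ^^ n) x - xs n) \<eta>))\<^sup>2 \<le> 6 * pi * (H2_norm ((T ^^ n) x - xs n))\<^sup>2 + 1"
      by (rule eval_bound[OF D \<eta>0])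
    also have "\<dots> \<le> 6 * pi + 1" using n1 by simp
    finally have "2 * pi * (Re \<eta> / 4) * (cmod (x \<eta> - of_nat n * v \<eta>))\<^sup>2 \<le> 6 * pi + 1"
      by (simp add: Tn\<eta> xs\<eta>)
    then show ?thesis unfolding B_def using \<eta>0 by (simp add: pos_le_divide_eq mult.commute)
  qed
  have B0: "0 \<le> B" unfolding B_def using \<eta>0 by simp
  obtain n :: nat where n: "(cmod (x \<eta>) + B + 1) / cmod (v \<eta>) < of_nat n"
    using reals_Archimedean2 by blast
  have vpos: "0 < cmod (v \<eta>)" using v\<eta> by simp
  have "cmod (x \<eta>) + B + 1 < of_nat n * cmod (v \<eta>)"
    using n vpos by (simp add: pos_divide_less_eq)
  also have "\<dots> = cmod (of_nat n * v \<eta>)" by (simp add: norm_mult)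
  also have "\<dots> \<le> cmod (x \<eta>) + cmod (x \<eta> - of_nat n * v \<eta>)"
    using norm_triangle_ineq2[of "of_nat n * v \<eta>" "x \<eta>"] by (simp add: norm_minus_commute)
  finally have big: "B + 1 < cmod (x \<eta> - of_nat n * v \<eta>)" by simp
  have "B + 1 \<le> (cmod (x \<eta> - of_nat n * v \<eta>))\<^sup>2"
  proof -
    have "1 \<le> cmod (x \<eta> - of_nat n * v \<eta>)" using big B0 by simp
    then have "1 * cmod (x \<eta> - of_nat n * v \<eta>) \<le> cmod (x \<eta> - of_nat n * v \<eta>) * cmod (x \<eta> - of_nat n * v \<eta>)"
      by (intro mult_right_mono) auto
    then have "cmod (x \<eta> - of_nat n * v \<eta>) \<le> (cmod (x \<eta> - of_nat n * v \<eta>))\<^sup>2"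
      by (simp add: power2_eq_square)
    then show ?thesis using big by simp
  qed
  with Bd[of n] show False by simp
qed

end
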